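(* (1) For every $2\le n<\omega$, the algebra $K_n$ is a simple regular pseudocomplemented Kleene algebra of range $2$, i.e. a simple algebra of $\mathbf{K}_2$. (2) For $2\le n,m<\omega$, if $K_n$ is isomorphic to a subalgebra of $K_m$, then $n=m$.
   Context: For $2\le n<\omega$ let $A_n=\{a_i:0\le i<n\}$, $B_n=\{b_i:0\le i<n\}$ be disjoint, $S_n=A_n\cup B_n$, and $\zeta(S_n)$ a disjoint copy of $S_n$, with $\zeta$ interchanging each $s\in S_n$ and its copy $\zeta(s)$. $P_n=S_n\cup\zeta(S_n)$ (discrete topology) is ordered by the partial order whose only strict comparabilities are, for $0\le i,j<n$: $a_i<\zeta(a_j)$, $b_i<\zeta(b_j)$, $a_i<\zeta(b_j)$ iff $i\ne j$, $b_i<\zeta(a_j)$ iff $i\ne j$. $K_n$ is the dual algebra of $P_n$: the decreasing subsets $X$ of $P_n$ with $\cap,\cup,\emptyset,P_n$, $X^\ast=P_n\setminus[X)$ and $X'=P_n\setminus\zeta(X)$. $\mathbf{K}_2$ is the variety of pseudocomplemented de Morgan algebras (bounded distributive lattice with pseudocomplement ${}^\ast$ and de Morgan involution ${}^\prime$) satisfying $x\wedge x^{\prime\ast\prime}\le y\vee y^\ast$, $x\wedge x'\le y\vee y'$, and $(x\wedge x^{\prime\ast})^{2(\prime\ast)}=(x\wedge x^{\prime\ast})^{3(\prime\ast)}$, where $x^{0(\prime\ast)}=x$, $x^{(k+1)(\prime\ast)}=((x^{k(\prime\ast)})')^\ast$. *)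

theory Defs
  imports Main
begin

record 'a pdma =
  car  :: "'a set"
  mt   :: "'a \<Rightarrow> 'a \<Rightarrow> 'a"
  jn   :: "'a \<Rightarrow> 'a \<Rightarrow> 'a"
  zr   :: "'a"
  on   :: "'a"
  pc   :: "'a \<Rightarrow> 'a"          (* pseudocomplement * *)
  ng   :: "'a \<Rightarrow> 'a"          (* de Morgan involution ' *)

definition ple :: "'a pdma \<Rightarrow> 'a \<Rightarrow> 'a \<Rightarrow> bool" where
  "ple A x y \<longleftrightarrow> mt A x y = x"

definition is_pdma :: "'a pdma \<Rightarrow> bool" where
  "is_pdma A \<longleftrightarrow>
     zr A \<in> car A \<and> on A \<in> car A \<and>
     (\<forall>x\<in>car A. \<forall>y\<in>car A. mt A x y \<in> car A \<and> jn A x y \<in> car A) \<and>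
     (\<forall>x\<in>car A. pc A x \<in> car A \<and> ng A x \<in> car A) \<and>
     \<comment> \<open>bounded distributive lattice\<close>
     (\<forall>x\<in>car A. \<forall>y\<in>car A. \<forall>z\<in>car A.
        mt A x (mt A y z) = mt A (mt A x y) z \<and> jn A x (jn A y z) = jn A (jn A x y) z \<and>
        mt A x (jn A y z) = jn A (mt A x y) (mt A x z)) \<and>
     (\<forall>x\<in>car A. \<forall>y\<in>car A.
        mt A x y = mt A y x \<and> jn A x y = jn A y x \<and>
        mt A x (jn A x y) = x \<and> jn A x (mt A x y) = x) \<and>
     (\<forall>x\<in>car A. mt A (zr A) x = zr A \<and> jn A (on A) x = on A) \<and>
     \<comment> \<open>pseudocomplement\<close>
     (\<forall>x\<in>car A. \<forall>y\<in>car A. mt A x y = zr A \<longleftrightarrow> ple A y (pc A x)) \<and>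
     \<comment> \<open>de Morgan involution\<close>
     (\<forall>x\<in>car A. ng A (ng A x) = x) \<and>
     (\<forall>x\<in>car A. \<forall>y\<in>car A.
        ng A (jn A x y) = mt A (ng A x) (ng A y) \<and> ng A (mt A x y) = jn A (ng A x) (ng A y))"

definition npc_iter :: "'a pdma \<Rightarrow> nat \<Rightarrow> 'a \<Rightarrow> 'a" where
  "npc_iter A k = (\<lambda>x. pc A (ng A x)) ^^ k"

definition in_K2 :: "'a pdma \<Rightarrow> bool" where
  "in_K2 A \<longleftrightarrow> is_pdma A \<and>
     (\<forall>x\<in>car A. \<forall>y\<in>car A.
        ple A (mt A x (ng A (pc A (ng A x)))) (jn A y (pc A y))) \<and>
     (\<forall>x\<in>car A. \<forall>y\<in>car A. ple A (mt A x (ng A x)) (jn A y (ng A y))) \<and>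
     (\<forall>x\<in>car A. npc_iter A 2 (mt A x (pc A (ng A x))) = npc_iter A 3 (mt A x (pc A (ng A x))))"

definition congruence :: "'a pdma \<Rightarrow> ('a \<times> 'a) set \<Rightarrow> bool" where
  "congruence A \<theta> \<longleftrightarrow> equiv (car A) \<theta> \<and>
     (\<forall>x y u v. (x,y) \<in> \<theta> \<longrightarrow> (u,v) \<in> \<theta> \<longrightarrow>
        (mt A x u, mt A y v) \<in> \<theta> \<and> (jn A x u, jn A y v) \<in> \<theta>) \<and>
     (\<forall>x y. (x,y) \<in> \<theta> \<longrightarrow> (pc A x, pc A y) \<in> \<theta> \<and> (ng A x, ng A y) \<in> \<theta>)"

definition simple :: "'a pdma \<Rightarrow> bool" where
  "simple A \<longleftrightarrow> (\<exists>x\<in>car A. \<exists>y\<in>car A. x \<noteq> y) \<and>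
     (\<forall>\<theta>. congruence A \<theta> \<longrightarrow> \<theta> = Id_on (car A) \<or> \<theta> = car A \<times> car A)"

text \<open>Embedding = injective homomorphism, i.e. isomorphism onto a subalgebra.\<close>
definition embedding :: "'a pdma \<Rightarrow> 'b pdma \<Rightarrow> ('a \<Rightarrow> 'b) \<Rightarrow> bool" where
  "embedding A B h \<longleftrightarrow> inj_on h (car A) \<and> h ` car A \<subseteq> car B \<and>
     h (zr A) = zr B \<and> h (on A) = on B \<and>
     (\<forall>x\<in>car A. \<forall>y\<in>car A. h (mt A x y) = mt B (h x) (h y) \<and> h (jn A x y) = jn B (h x) (h y)) \<and>
     (\<forall>x\<in>car A. h (pc A x) = pc B (h x) \<and> h (ng A x) = ng B (h x))"

text \<open>A point (c, l, i): c = True means it lies in \<zeta>(S_n); l = False means letter a, l = True letter b;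
  i is the index. So (False,False,i) = a_i, (False,True,i) = b_i, (True,l,i) = \<zeta>(...).\<close>
type_synonym pt = "bool \<times> bool \<times> nat"

definition Pn :: "nat \<Rightarrow> pt set" where
  "Pn n = {(c,l,i). i < n}"

definition zeta :: "pt \<Rightarrow> pt" where
  "zeta p = (case p of (c,l,i) \<Rightarrow> (\<not> c, l, i))"

definition leP :: "pt \<Rightarrow> pt \<Rightarrow> bool" where
  "leP p q \<longleftrightarrow> p = q \<or>
     (case p of (c,l,i) \<Rightarrow> case q of (d,m,j) \<Rightarrow> \<not> c \<and> d \<and> (l = m \<or> i \<noteq> j))"

definition decr :: "nat \<Rightarrow> pt set \<Rightarrow> bool" where
  "decr n X \<longleftrightarrow> X \<subseteq> Pn n \<and> (\<forall>p\<in>X. \<forall>q\<in>Pn n. leP q p \<longrightarrow> q \<in> X)"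

definition upset :: "nat \<Rightarrow> pt set \<Rightarrow> pt set" where
  "upset n X = {q \<in> Pn n. \<exists>p\<in>X. leP p q}"

definition Kn :: "nat \<Rightarrow> pt set pdma" where
  "Kn n = \<lparr> car = {X. decr n X}, mt = (\<inter>), jn = (\<union>), zr = {}, on = Pn n,
            pc = (\<lambda>X. Pn n - upset n X), ng = (\<lambda>X. Pn n - zeta ` X) \<rparr>"

end

theory Submission imports Defs begin

lemma zeta_simp[simp]: "zeta (c,l,i) = (\<not>c,l,i)" by (simp add: zeta_def)
lemma zeta_zeta[simp]: "zeta (zeta p) = p" by (cases p) (auto simp: zeta_def)
lemma leP_simp[simp]: "leP (c,l,i) (d,m,j) \<longleftrightarrow> (c=d \<and> l=m \<and> i=j) \<or> (\<not>c \<and> d \<and> (l=m \<or> i\<noteq>j))"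
  by (auto simp: leP_def)
lemma Pn_mem[simp]: "(c,l,i) \<in> Pn n \<longleftrightarrow> i<n" by (simp add: Pn_def)
lemma Kn_simps[simp]: "car (Kn n) = {X. decr n X}" "mt (Kn n) = (\<inter>)" "jn (Kn n) = (\<union>)"
  "zr (Kn n) = {}" "on (Kn n) = Pn n" "pc (Kn n) = (\<lambda>X. Pn n - upset n X)"
  "ng (Kn n) = (\<lambda>X. Pn n - zeta ` X)" by (simp_all add: Kn_def)

lemma leP_refl: "leP p p" by (simp add: leP_def)
lemma leP_trans: "leP p q \<Longrightarrow> leP q r \<Longrightarrow> leP p r"
  by (cases p; cases q; cases r) auto
lemma leP_zeta: "leP p q \<Longrightarrow> leP (zeta q) (zeta p)"
  by (cases p; cases q) auto
lemma zeta_Pn[simp]: "zeta p \<in> Pn n \<longleftrightarrow> p \<in> Pn n"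
  by (cases p) auto
lemma decr_sub: "decr n X \<Longrightarrow> X \<subseteq> Pn n" by (simp add: decr_def)
lemma decr_down: "decr n X \<Longrightarrow> p \<in> X \<Longrightarrow> q \<in> Pn n \<Longrightarrow> leP q p \<Longrightarrow> q \<in> X"
  by (auto simp: decr_def)

lemma decr_empty: "decr n {}" by (simp add: decr_def)
lemma decr_Pn: "decr n (Pn n)" by (simp add: decr_def)
lemma decr_Int: "decr n X \<Longrightarrow> decr n Y \<Longrightarrow> decr n (X \<inter> Y)" by (auto simp: decr_def)
lemma decr_Un: "decr n X \<Longrightarrow> decr n Y \<Longrightarrow> decr n (X \<union> Y)" by (auto simp: decr_def)
lemma decr_pc: "decr n (Pn n - upset n X)"
  unfolding decr_def upset_def using leP_trans by blast
lemma decr_ng: "decr n X \<Longrightarrow> decr n (Pn n - zeta ` X)"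
  unfolding decr_def
proof (intro conjI ballI impI)
  fix p q assume X: "X \<subseteq> Pn n \<and> (\<forall>p\<in>X. \<forall>q\<in>Pn n. leP q p \<longrightarrow> q \<in> X)"
    and p: "p \<in> Pn n - zeta ` X" and q: "q \<in> Pn n" and le: "leP q p"
  show "q \<in> Pn n - zeta ` X"
  proof (rule ccontr)
    assume "q \<notin> Pn n - zeta ` X"
    then have "zeta q \<in> X" using q by (metis DiffI image_iff zeta_zeta)
    moreover have "leP (zeta p) (zeta q)" using leP_zeta[OF le] .
    ultimately have "zeta p \<in> X" using X p by auto
    then show False using p by (metis DiffD2 image_eqI zeta_zeta)
  qed
qed simp

lemma upset_self: "X \<subseteq> Pn n \<Longrightarrow> X \<subseteq> upset n X"
  unfolding upset_def using leP_refl by blast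

lemma pc_law: "decr n X \<Longrightarrow> decr n Y \<Longrightarrow> (X \<inter> Y = {}) = (Y \<inter> (Pn n - upset n X) = Y)"
proof
  assume X: "decr n X" and Y: "decr n Y" and d: "X \<inter> Y = {}"
  have "Y \<subseteq> Pn n - upset n X"
  proof
    fix y assume y: "y \<in> Y"
    have "y \<notin> upset n X"
    proof
      assume "y \<in> upset n X"
      then obtain x where "x \<in> X" "leP x y" unfolding upset_def by blast
      then have "x \<in> Y" using decr_down[OF Y y] decr_sub[OF X] by blast
      then show False using d \<open>x \<in> X\<close> by blast
    qed
    then show "y \<in> Pn n - upset n X" using decr_sub[OF Y] y by blast
  qed
  then show "Y \<inter> (Pn n - upset n X) = Y" by blast
next
  assume X: "decr n X" and Y: "decr n Y" and "Y \<inter> (Pn n - upset n X) = Y"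
  then have "Y \<inter> upset n X = {}" by blast
  then show "X \<inter> Y = {}" using upset_self[OF decr_sub[OF X]] by blast
qed

lemma ng_ng: "X \<subseteq> Pn n \<Longrightarrow> Pn n - zeta ` (Pn n - zeta ` X) = X"
proof (intro equalityI subsetI)
  fix p assume X: "X \<subseteq> Pn n" and p: "p \<in> Pn n - zeta ` (Pn n - zeta ` X)"
  then have "zeta p \<notin> Pn n - zeta ` X" by (metis DiffE imageI zeta_zeta)
  then have "zeta p \<in> zeta ` X" using p by simp
  then show "p \<in> X" by (metis imageE zeta_zeta)
next
  fix p assume X: "X \<subseteq> Pn n" and p: "p \<in> X"
  have "zeta p \<in> zeta ` X" using p by blast
  then have "p \<notin> zeta ` (Pn n - zeta ` X)" by (metis DiffD2 imageE zeta_zeta)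
  then show "p \<in> Pn n - zeta ` (Pn n - zeta ` X)" using X p by blast
qed

lemma inj_zeta: "inj zeta" by (metis injI zeta_zeta)


lemma ng_Un: "Pn n - zeta ` (X \<union> Y) = (Pn n - zeta ` X) \<inter> (Pn n - zeta ` Y)" by blast
lemma ng_Int: "Pn n - zeta ` (X \<inter> Y) = (Pn n - zeta ` X) \<union> (Pn n - zeta ` Y)"
  by (simp add: image_Int[OF inj_zeta] Diff_Int)

lemma is_pdma_Kn: "is_pdma (Kn n)"
  unfolding is_pdma_def ple_def Kn_simps mem_Collect_eq
  apply (intro conjI ballI)
  apply (simp_all only: decr_empty decr_Pn decr_Int decr_Un decr_pc decr_ng pc_law ng_ng decr_sub
     ng_Un ng_Int Int_assoc Un_assoc Int_Un_distrib Int_commute Un_commute Un_Int_eq Int_Un_eq simp_thms mem_Collect_eq)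
  apply (auto dest: decr_sub)
  done

lemma mem_zeta_img: "p \<in> zeta ` Z \<longleftrightarrow> zeta p \<in> Z"
  by (metis image_iff zeta_zeta)

lemma zeta_img_Pn: "zeta ` Pn n = Pn n"
  by (metis subsetI subset_antisym mem_zeta_img zeta_Pn)

lemma up_min: "W \<subseteq> Pn n \<Longrightarrow> (False,l,i) \<in> upset n W \<longleftrightarrow> (False,l,i) \<in> W"
proof
  assume "(False,l,i) \<in> upset n W"
  then obtain p where p: "p \<in> W" "leP p (False,l,i)" unfolding upset_def by blast
  obtain c m j where "p = (c,m,j)" by (cases p) blast
  then have "p = (False,l,i)" using p(2) by auto
  then show "(False,l,i) \<in> W" using p(1) by simp
next
  assume "W \<subseteq> Pn n" "(False,l,i) \<in> W"
  then show "(False,l,i) \<in> upset n W" using upset_self by blast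
qed

lemma F_S: "i < n \<Longrightarrow> (False,l,i) \<in> Pn n - upset n (Pn n - zeta ` Z) \<longleftrightarrow> (True,l,i) \<in> Z"
  using up_min[of "Pn n - zeta ` Z" n l i] by (auto simp: mem_zeta_img)

lemma F_below: "q \<in> Pn n - upset n (Pn n - zeta ` W) \<Longrightarrow> s \<in> Pn n \<Longrightarrow> leP s q \<Longrightarrow> zeta s \<in> W"
  unfolding upset_def by (auto simp: mem_zeta_img)

lemma F_noTrue: "(\<forall>l i. (True,l,i) \<notin> W) \<Longrightarrow> Pn n - upset n (Pn n - zeta ` W) = {}"
proof -
  assume W: "\<forall>l i. (True,l,i) \<notin> W"
  have "p \<in> upset n (Pn n - zeta ` W)" if p: "p \<in> Pn n" for p
  proof -
    obtain c l i where pc: "p = (c,l,i)" by (cases p) blast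
    then have "(False,l,i) \<in> Pn n - zeta ` W" using p W by (auto simp: mem_zeta_img)
    moreover have "leP (False,l,i) p" using pc by auto
    ultimately show ?thesis using p unfolding upset_def by blast
  qed
  then show ?thesis by blast
qed

lemma F_P: "Pn n - upset n (Pn n - zeta ` Pn n) = Pn n"
  by (simp add: zeta_img_Pn upset_def)

lemma K2_iii:
  assumes n: "2 \<le> n" and X: "decr n X"
  defines "F \<equiv> \<lambda>Z. Pn n - upset n (Pn n - zeta ` Z)"
  shows "F (F (X \<inter> F X)) = F (F (F (X \<inter> F X)))"
proof (cases "\<forall>l i. (True,l,i) \<notin> F (X \<inter> F X)")
  case True
  then have "F (F (X \<inter> F X)) = {}" unfolding F_def by (rule F_noTrue)
  moreover have "F {} = {}" unfolding F_def by (rule F_noTrue) simp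
  ultimately show ?thesis by simp
next
  case False
  then obtain l i where li: "(True,l,i) \<in> F (X \<inter> F X)" by blast
  then have i: "i < n" unfolding F_def by simp
  have T: "(True,l',i') \<in> X" if i': "i' < n" for l' i'
  proof -
    define j where "j = (if i = 0 then 1 else (0::nat))"
    have j: "j < n" "j \<noteq> i" using n by (auto simp: j_def)
    have "zeta (False,l',j) \<in> X \<inter> F X"
      using F_below[OF li[unfolded F_def], of "(False,l',j)"] j unfolding F_def by auto
    then have "(True,l',j) \<in> F X" by simp
    then show ?thesis using F_below[of "(True,l',j)" n X "(False,l',i')"] i' unfolding F_def by auto
  qed
  have XP: "X = Pn n"
  proof (intro equalityI subsetI)
    fix p assume "p \<in> X" then show "p \<in> Pn n" using decr_sub[OF X] by blast
  next
    fix p assume p: "p \<in> Pn n"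
    obtain c l' i' where pc: "p = (c,l',i')" by (cases p) blast
    then have i': "i' < n" using p by simp
    show "p \<in> X"
    proof (cases c)
      case True then show ?thesis using T[OF i'] pc by simp
    next
      case False
      then show ?thesis using decr_down[OF X T[OF i'], of p] p pc by simp
    qed
  qed
  have FP: "F (Pn n) = Pn n" unfolding F_def by (rule F_P)
  show ?thesis using XP FP by simp
qed

lemma K2_i:
  assumes X: "decr n X" and Y: "decr n Y"
  shows "X \<inter> (Pn n - zeta ` (Pn n - upset n (Pn n - zeta ` X))) \<subseteq> Y \<union> (Pn n - upset n Y)"
proof
  fix p assume p: "p \<in> X \<inter> (Pn n - zeta ` (Pn n - upset n (Pn n - zeta ` X)))"
  obtain c l i where pc: "p = (c,l,i)" by (cases p) blast
  have i: "i < n" using p pc decr_sub[OF X] by auto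
  show "p \<in> Y \<union> (Pn n - upset n Y)"
  proof (cases c)
    case True
    then have "(False,l,i) \<notin> Pn n - upset n (Pn n - zeta ` X)" using p pc by (auto simp: mem_zeta_img)
    then have "(True,l,i) \<notin> X" using F_S[OF i] by blast
    then show ?thesis using p pc True by simp
  next
    case False
    then show ?thesis using up_min[OF decr_sub[OF Y], of l i] pc i by auto
  qed
qed

lemma K2_ii:
  assumes X: "decr n X" and Y: "decr n Y"
  shows "X \<inter> (Pn n - zeta ` X) \<subseteq> Y \<union> (Pn n - zeta ` Y)"
proof
  fix p assume p: "p \<in> X \<inter> (Pn n - zeta ` X)"
  obtain c l i where pc: "p = (c,l,i)" by (cases p) blast
  have i: "i < n" using p pc decr_sub[OF X] by auto
  show "p \<in> Y \<union> (Pn n - zeta ` Y)"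
  proof (cases c)
    case True
    then have "(False,l,i) \<in> X" using decr_down[OF X, of p "(False,l,i)"] p pc i by auto
    then show ?thesis using p pc True by (auto simp: mem_zeta_img)
  next
    case False
    have "(True,l,i) \<in> Y \<Longrightarrow> (False,l,i) \<in> Y" using decr_down[OF Y, of "(True,l,i)" "(False,l,i)"] i by auto
    then show ?thesis using pc False i by (auto simp: mem_zeta_img)
  qed
qed

lemma in_K2_Kn: "2 \<le> n \<Longrightarrow> in_K2 (Kn n)"
  unfolding in_K2_def ple_def
  apply (intro conjI is_pdma_Kn ballI)
  subgoal for x y using K2_i[of n x y] by (auto simp: Int_absorb2)
  subgoal for x y using K2_ii[of n x y] by (auto simp: Int_absorb2)
  subgoal for x using K2_iii[of n x] by (simp add: npc_iter_def numeral_2_eq_2 numeral_3_eq_3)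
  done

definition Sn :: "nat \<Rightarrow> pt set" where "Sn n = {p \<in> Pn n. \<not> fst p}"

lemma Sn_mem[simp]: "(c,l,i) \<in> Sn n \<longleftrightarrow> \<not> c \<and> i < n" by (auto simp: Sn_def)

lemma decr_Sn: "decr n (Sn n)"
  unfolding decr_def Sn_def by (auto simp: leP_def)

lemma decr_single: "i < n \<Longrightarrow> decr n {(False,l,i)}"
  unfolding decr_def by (auto simp: leP_def)

lemma ng_Sn: "Pn n - zeta ` Sn n = Sn n"
proof (intro equalityI subsetI)
  fix p assume p: "p \<in> Pn n - zeta ` Sn n"
  obtain c l i where pc: "p = (c,l,i)" by (cases p) blast
  have "i < n" using p pc by simp
  moreover have "zeta p \<notin> Sn n" using p by (simp add: mem_zeta_img)
  ultimately show "p \<in> Sn n" using pc by simp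
next
  fix p assume p: "p \<in> Sn n"
  obtain c l i where pc: "p = (c,l,i)" by (cases p) blast
  have "\<not> c" "i < n" using p pc by auto
  then show "p \<in> Pn n - zeta ` Sn n" using pc by (simp add: mem_zeta_img)
qed

lemma simple_Kn:
  assumes n: "2 \<le> n"
  shows "simple (Kn n)"
  unfolding simple_def
proof (intro conjI allI impI)
  have "(False,False,0) \<in> Pn n" using n by simp
  then show "\<exists>x\<in>car (Kn n). \<exists>y\<in>car (Kn n). x \<noteq> y"
  proof -
    have "{} \<noteq> Pn n" using \<open>(False,False,0) \<in> Pn n\<close> by blast
    then show ?thesis using decr_empty decr_Pn by (metis Kn_simps(1) mem_Collect_eq)
  qed
next
  fix \<theta> assume c: "congruence (Kn n) \<theta>"
  have eq: "equiv {X. decr n X} \<theta>" using c by (simp add: congruence_def)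
  have sub: "\<theta> \<subseteq> {X. decr n X} \<times> {X. decr n X}" using eq by (simp add: equiv_def)
  have rfl: "decr n U \<Longrightarrow> (U,U) \<in> \<theta>" for U using eq by (simp add: equiv_def refl_on_def)
  have sy: "(x,y) \<in> \<theta> \<Longrightarrow> (y,x) \<in> \<theta>" for x y using eq by (auto simp: equiv_def sym_def)
  have tr: "(x,y) \<in> \<theta> \<Longrightarrow> (y,z) \<in> \<theta> \<Longrightarrow> (x,z) \<in> \<theta>" for x y z
    using eq unfolding equiv_def trans_def by blast
  have M: "(x,y) \<in> \<theta> \<Longrightarrow> (u,v) \<in> \<theta> \<Longrightarrow> (x \<inter> u, y \<inter> v) \<in> \<theta>" for x y u v
    using c by (simp add: congruence_def)
  have J: "(x,y) \<in> \<theta> \<Longrightarrow> (u,v) \<in> \<theta> \<Longrightarrow> (x \<union> u, y \<union> v) \<in> \<theta>" for x y u v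
    using c by (simp add: congruence_def)
  have PC: "(x,y) \<in> \<theta> \<Longrightarrow> (Pn n - upset n x, Pn n - upset n y) \<in> \<theta>" for x y
    using c by (simp add: congruence_def)
  have NG: "(x,y) \<in> \<theta> \<Longrightarrow> (Pn n - zeta ` x, Pn n - zeta ` y) \<in> \<theta>" for x y
    using c by (simp add: congruence_def)
  show "\<theta> = Id_on (car (Kn n)) \<or> \<theta> = car (Kn n) \<times> car (Kn n)"
  proof (cases "\<forall>x y. (x,y) \<in> \<theta> \<longrightarrow> x = y")
    case True
    then have "\<theta> = Id_on {X. decr n X}" using sub rfl by (auto simp: Id_on_def)
    then show ?thesis by simp
  next
    case False
    then obtain A B where AB: "(A,B) \<in> \<theta>" "A \<noteq> B" by blast
    have step1: "(A,B) \<in> \<theta> \<Longrightarrow> (False,l,i) \<in> B - A \<Longrightarrow> i < n \<Longrightarrow> ({}, {(False,l,i)}) \<in> \<theta>" for A B l i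
      using M[of A B "{(False,l,i)}" "{(False,l,i)}"] rfl[OF decr_single] by (auto simp: Int_absorb1)
    obtain q l i where q: "q = (False,l,i)" "i < n" "({}, {q}) \<in> \<theta>"
    proof -
      have "\<exists>A' B' p. (A',B') \<in> \<theta> \<and> p \<in> B' - A'"
      proof (cases "B \<subseteq> A")
        case True
        then obtain p where "p \<in> A - B" using AB(2) by blast
        then show ?thesis using sy[OF AB(1)] by blast
      next
        case False
        then obtain p where "p \<in> B - A" by blast
        then show ?thesis using AB(1) by blast
      qed
      then obtain A' B' p where ABp: "(A',B') \<in> \<theta>" "p \<in> B' - A'" by blast
      obtain c l i where pc: "p = (c,l,i)" by (cases p) blast
      have "decr n B'" using sub ABp(1) by blast
      then have "p \<in> Pn n" using ABp(2) decr_sub by blast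
      then have i: "i < n" using pc by simp
      show ?thesis
      proof (cases c)
        case False
        have "({}, {(False,l,i)}) \<in> \<theta>" using step1[OF ABp(1), of l i] ABp(2) pc False i by simp
        then show ?thesis using that[of "(False,l,i)" l i] i by simp
      next
        case True
        have "(True,l,i) \<in> B'" "(True,l,i) \<notin> A'" using ABp(2) pc True by auto
        then have "(False,l,i) \<in> (Pn n - zeta ` A') - (Pn n - zeta ` B')" using i
          by (simp add: mem_zeta_img)
        then have "({}, {(False,l,i)}) \<in> \<theta>" using step1[OF sy[OF NG[OF ABp(1)]]] i by simp
        then show ?thesis using that[of "(False,l,i)" l i] i by simp
      qed
    qed
    define Q where "Q = Pn n - upset n {q}"
    define Y where "Y = (Pn n - zeta ` Q) \<inter> Sn n"
    have c2: "(Pn n, Q) \<in> \<theta>" using PC[OF q(3)] by (simp add: Q_def upset_def)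
    have c3: "({}, Pn n - zeta ` Q) \<in> \<theta>" using NG[OF c2] by (simp add: zeta_img_Pn)
    have c4: "({}, Y) \<in> \<theta>" using M[OF c3 rfl[OF decr_Sn]] by (simp add: Y_def)
    have c5: "(Pn n, Pn n - upset n Y) \<in> \<theta>" using PC[OF c4] by (simp add: upset_def)
    have c6: "(Pn n, Y \<union> (Pn n - upset n Y)) \<in> \<theta>" using J[OF c4 c5] by simp
    have c7: "Y \<union> (Pn n - upset n Y) = Sn n"
    proof (intro equalityI subsetI)
      fix p assume p: "p \<in> Y \<union> (Pn n - upset n Y)"
      obtain c l' i' where pc: "p = (c,l',i')" by (cases p) blast
      have i': "i' < n" using p pc Y_def by auto
      show "p \<in> Sn n"
      proof (cases c)
        case False then show ?thesis using pc i' by simp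
      next
        case True
        define j where "j = (if i' = 0 then 1 else (0::nat))"
        have j: "j < n" "j \<noteq> i'" using n by (auto simp: j_def)
        have "(False,l,j) \<in> Y"
          using j q by (auto simp: Y_def Q_def upset_def mem_zeta_img)
        moreover have "leP (False,l,j) p" using pc True j by auto
        moreover have "p \<in> Pn n" using pc i' by simp
        ultimately have "p \<in> upset n Y" unfolding upset_def by blast
        then show ?thesis using p Y_def by auto
      qed
    next
      fix p assume p: "p \<in> Sn n"
      obtain c l' i' where pc: "p = (c,l',i')" by (cases p) blast
      have "Y \<subseteq> Pn n" by (auto simp: Y_def)
      then show "p \<in> Y \<union> (Pn n - upset n Y)" using up_min[of Y n l' i'] p pc by auto
    qed
    have c8: "({}, Sn n) \<in> \<theta>" using NG[OF c6] c7 ng_Sn by (simp add: zeta_img_Pn)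
    have EP: "({}, Pn n) \<in> \<theta>" using tr[OF c8 sy[OF c6[unfolded c7]]] .
    have all: "decr n U \<Longrightarrow> ({}, U) \<in> \<theta>" for U
      using M[OF EP rfl[of U]] decr_sub[of n U] by (simp add: Int_absorb1)
    have "\<theta> = {X. decr n X} \<times> {X. decr n X}"
    proof (intro equalityI subsetI)
      fix z assume "z \<in> \<theta>" then show "z \<in> {X. decr n X} \<times> {X. decr n X}" using sub by blast
    next
      fix z assume "z \<in> {X. decr n X} \<times> {X. decr n X}"
      then obtain U V where z: "z = (U,V)" "decr n U" "decr n V" by blast
      show "z \<in> \<theta>" using tr[OF sy[OF all[OF z(2)]] all[OF z(3)]] z(1) by simp
    qed
    then show ?thesis by simp
  qed
qed

lemma Pn_eq: "Pn n = UNIV \<times> UNIV \<times> {..<n}" by (auto simp: Pn_def)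
lemma finite_Pn: "finite (Pn n)" by (simp add: Pn_eq)
lemma Sn_eq: "Sn n = (\<lambda>(l,i). (False,l,i)) ` (UNIV \<times> {..<n})" by (auto simp: Sn_def Pn_def)
lemma card_Sn: "card (Sn n) = 2 * n"
proof -
  have "inj_on (\<lambda>(l,i). (False,l,i)) (UNIV \<times> {..<n})" by (auto simp: inj_on_def)
  then have "card (Sn n) = card (UNIV \<times> {..<n} :: (bool \<times> nat) set)" unfolding Sn_eq by (rule card_image)
  also have "\<dots> = 2 * n" by (simp add: card_cartesian_product)
  finally show ?thesis .
qed
lemma finite_Sn: "finite (Sn n)" by (simp add: Sn_eq)

lemma decr_Union: "\<forall>X\<in>F. decr n X \<Longrightarrow> decr n (\<Union>F)"
  unfolding decr_def by blast

lemma upset_Sn: "upset n (Sn n) = Pn n"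
proof (intro equalityI subsetI)
  fix p assume p: "p \<in> Pn n"
  obtain c l i where pc: "p = (c,l,i)" by (cases p) blast
  have "(False,l,i) \<in> Sn n" "leP (False,l,i) p" using p pc by auto
  then show "p \<in> upset n (Sn n)" using p unfolding upset_def by blast
qed (auto simp: upset_def)

lemma W_char:
  assumes W: "decr m W" and ng: "Pn m - zeta ` W = W" and pc: "Pn m - upset m W = {}"
  shows "W = Sn m"
proof (intro equalityI subsetI)
  fix p assume p: "p \<in> Sn m"
  obtain c l i where pp: "p = (c,l,i)" by (cases p) blast
  have "p \<in> upset m W" using pc p by (auto simp: Sn_def)
  then show "p \<in> W" using up_min[OF decr_sub[OF W]] pp p by auto
next
  fix p assume p: "p \<in> W"
  obtain c l i where pp: "p = (c,l,i)" by (cases p) blast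
  have i: "i < m" using p pp decr_sub[OF W] by auto
  show "p \<in> Sn m"
  proof (cases c)
    case False then show ?thesis using pp i by simp
  next
    case True
    have "p \<notin> zeta ` W" using p ng by blast
    then have "(False,l,i) \<notin> W" using pp True by (simp add: mem_zeta_img)
    moreover have "(False,l,i) \<in> W" using decr_down[OF W p, of "(False,l,i)"] pp True i by simp
    ultimately show ?thesis by blast
  qed
qed

lemma two_pc:
  assumes U: "U \<subseteq> Sn m" and u: "u1 \<in> U" "u2 \<in> U" "u1 \<noteq> u2"
  shows "Pn m - upset m U \<subseteq> Sn m"
proof
  fix p assume p: "p \<in> Pn m - upset m U"
  obtain c l i where pp: "p = (c,l,i)" by (cases p) blast
  obtain c1 l1 i1 where p1: "u1 = (c1,l1,i1)" by (cases u1) blast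
  obtain c2 l2 i2 where p2: "u2 = (c2,l2,i2)" by (cases u2) blast
  have c12: "\<not> c1" "\<not> c2" using U u p1 p2 by auto
  show "p \<in> Sn m"
  proof (cases c)
    case False then show ?thesis using p pp by simp
  next
    case True
    have "leP u1 p \<or> leP u2 p" using pp p1 p2 c12 True u(3) by auto
    then have "p \<in> upset m U" using u p unfolding upset_def by blast
    then show ?thesis using p by blast
  qed
qed

lemma emb_eq:
  assumes n: "2 \<le> n" and m: "2 \<le> m" and e: "embedding (Kn n) (Kn m) h"
  shows "n = m"
proof -
  have inj: "inj_on h {X. decr n X}" and im: "\<And>X. decr n X \<Longrightarrow> decr m (h X)"
    and h0: "h {} = {}" and hP: "h (Pn n) = Pn m"
    and hI: "\<And>X Y. decr n X \<Longrightarrow> decr n Y \<Longrightarrow> h (X \<inter> Y) = h X \<inter> h Y"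
    and hU: "\<And>X Y. decr n X \<Longrightarrow> decr n Y \<Longrightarrow> h (X \<union> Y) = h X \<union> h Y"
    and hpc: "\<And>X. decr n X \<Longrightarrow> h (Pn n - upset n X) = Pn m - upset m (h X)"
    and hng: "\<And>X. decr n X \<Longrightarrow> h (Pn n - zeta ` X) = Pn m - zeta ` (h X)"
    using e unfolding embedding_def by (auto simp: image_subset_iff)
  have hS: "h (Sn n) = Sn m"
  proof (rule W_char)
    show "decr m (h (Sn n))" using im[OF decr_Sn] .
    show "Pn m - zeta ` h (Sn n) = h (Sn n)" using hng[OF decr_Sn] ng_Sn by simp
    show "Pn m - upset m (h (Sn n)) = {}" using hpc[OF decr_Sn] upset_Sn h0 by simp
  qed
  have single: "\<exists>u. h {s} = {u} \<and> u \<in> Sn m" if s: "s \<in> Sn n" for s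
  proof -
    obtain c l i where sp: "s = (c,l,i)" by (cases s) blast
    have c: "\<not> c" and i: "i < n" using s sp by auto
    have ds: "decr n {s}" using decr_single[OF i] sp c by simp
    have "h ({s} \<inter> Sn n) = h {s} \<inter> Sn m" using hI[OF ds decr_Sn] hS by simp
    then have US: "h {s} \<subseteq> Sn m" using s by (metis Int_absorb2 Int_lower2 empty_subsetI insert_subset)
    have "h {s} \<noteq> {}"
    proof
      assume "h {s} = {}"
      then have "h {s} = h {}" using h0 by simp
      then have "{s} = {}" using inj ds decr_empty by (auto dest: inj_onD)
      then show False by simp
    qed
    then obtain u where u: "u \<in> h {s}" by blast
    have "h {s} = {u}"
    proof (rule ccontr)
      assume "h {s} \<noteq> {u}"
      then obtain u2 where u2: "u2 \<in> h {s}" "u2 \<noteq> u" using u by blast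
      define D where "D = Pn n - upset n {s}"
      have dD: "decr n D" unfolding D_def by (rule decr_pc)
      have "h D \<subseteq> Sn m" unfolding D_def hpc[OF ds] using two_pc[OF US u u2(1)] u2(2) by blast
      then have "h (D \<inter> Sn n) = h D" using hI[OF dD decr_Sn] hS by blast
      then have "D \<inter> Sn n = D" using inj decr_Int[OF dD decr_Sn] dD by (auto dest: inj_onD)
      moreover have "(True, \<not> l, i) \<in> D" using sp c i unfolding D_def upset_def by auto
      ultimately have "(True, \<not> l, i) \<in> Sn n" by blast
      then show False by simp
    qed
    then show ?thesis using US by blast
  qed
  define g where "g s = the_elem (h {s})" for s
  have gs: "s \<in> Sn n \<Longrightarrow> h {s} = {g s} \<and> g s \<in> Sn m" for s
  proof -
    assume s: "s \<in> Sn n"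
    obtain u where u: "h {s} = {u}" "u \<in> Sn m" using single[OF s] by blast
    have "g s = u" unfolding g_def u(1) by simp
    then show ?thesis using u by simp
  qed
  have dsing: "s \<in> Sn n \<Longrightarrow> decr n {s}" for s
  proof -
    assume s: "s \<in> Sn n"
    obtain c l i where sp: "s = (c,l,i)" by (cases s) blast
    then have "\<not> c" "i < n" using s by auto
    then show ?thesis using decr_single[of i n l] sp by simp
  qed
  have ginj: "inj_on g (Sn n)"
  proof (rule inj_onI)
    fix s t assume st: "s \<in> Sn n" "t \<in> Sn n" "g s = g t"
    have "h {s} = {g s}" "h {t} = {g t}" using gs st(1,2) by blast+
    then have "h {s} = h {t}" using st(3) by simp
    moreover have "{s} \<in> {X. decr n X}" "{t} \<in> {X. decr n X}" using dsing st(1,2) by auto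
    ultimately have "{s} = {t}" using inj_onD[OF inj] by blast
    then show "s = t" by simp
  qed
  have hUnion: "finite F \<Longrightarrow> (\<forall>X\<in>F. decr n X) \<Longrightarrow> h (\<Union>F) = \<Union>(h ` F)" for F
  proof (induction F rule: finite_induct)
    case empty then show ?case using h0 by simp
  next
    case (insert X F)
    then have "decr n X" "decr n (\<Union>F)" using decr_Union by auto
    then show ?case using hU insert by simp
  qed
  have Sn_U: "Sn n = \<Union>((\<lambda>s. {s}) ` Sn n)" by blast
  have "h (Sn n) = \<Union>(h ` (\<lambda>s. {s}) ` Sn n)"
    by (subst Sn_U, rule hUnion) (use finite_Sn dsing in auto)
  also have "\<dots> = \<Union>((\<lambda>s. {g s}) ` Sn n)" unfolding image_image
    by (rule SUP_cong) (use gs in blast)+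
  also have "\<dots> = g ` Sn n" by blast
  finally have "g ` Sn n = Sn m" using hS by simp
  then have "card (Sn n) = card (Sn m)" using card_image[OF ginj] by simp
  then show "n = m" by (simp add: card_Sn)
qed

theorem lemma6p2:
  shows "(\<forall>n::nat. 2 \<le> n \<longrightarrow> in_K2 (Kn n) \<and> simple (Kn n)) \<and>
         (\<forall>n m::nat. 2 \<le> n \<longrightarrow> 2 \<le> m \<longrightarrow> (\<exists>h. embedding (Kn n) (Kn m) h) \<longrightarrow> n = m)"
  using in_K2_Kn simple_Kn emb_eq by blast
end
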